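(* Let $a<b$ be real numbers and let $0<\alpha,\beta\leq 1$ with $1<\alpha+\beta\leq 2$. Define $G:[a,b]\times[a,b]\to\mathbb{R}$ by $$G(t,r)=\begin{cases}\dfrac{1}{\Gamma(\alpha)\Gamma(\beta)}\displaystyle\int_a^r (t-s)^{\beta-1}(r-s)^{\alpha-1}\,ds, & a\leq r\leq t\leq b,\\[0.3cm] \dfrac{1}{\Gamma(\alpha)\Gamma(\beta)}\displaystyle\int_a^t (t-s)^{\beta-1}(r-s)^{\alpha-1}\,ds, & a\leq t\leq r\leq b.\end{cases}$$ Then: (1) $G(t,r)\geq 0$ for all $a\leq r\leq t\leq b$; (2) $\max_{t\in[a,b]}G(t,r)=G(r,r)$ for all $r\in[a,b]$; (3) $\max_{r\in[a,b]}G(r,r)=\dfrac{(b-a)^{\alpha+\beta-1}}{(\alpha+\beta-1)\Gamma(\alpha)\Gamma(\beta)}$.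
   Context: $\Gamma$ denotes the Gamma function. *)

theory Defs
  imports "HOL-Analysis.Analysis"
begin

definition Gker :: "real \<Rightarrow> real \<Rightarrow> real \<Rightarrow> real \<Rightarrow> real \<Rightarrow> real" where
  "Gker a \<alpha> \<beta> t r =
     (if r \<le> t
      then (1 / (Gamma \<alpha> * Gamma \<beta>)) *
             integral {a..r} (\<lambda>s. (t - s) powr (\<beta> - 1) * (r - s) powr (\<alpha> - 1))
      else (1 / (Gamma \<alpha> * Gamma \<beta>)) *
             integral {a..t} (\<lambda>s. (t - s) powr (\<beta> - 1) * (r - s) powr (\<alpha> - 1)))"

end

theory Submission
  imports Defs
begin

lemma powr_int:
  fixes a r c :: real
  assumes "a \<le> r" "c > -1"
  shows "((\<lambda>s. (r - s) powr c) has_integral ((r-a) powr (c+1)/(c+1))) {a..r}"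
proof -
  have "((\<lambda>x. x powr c) has_integral ((r-a) powr (c+1)/(c+1))) {0..r-a}"
    by (rule has_integral_powr_from_0) (use assms in auto)
  from has_integral_reflect_lemma_real[OF this]
  have "((\<lambda>x. (-x) powr c) has_integral ((r-a) powr (c+1)/(c+1))) {-(r-a)..-0}" .
  from has_integral_shift_real_ivl[OF this, of "-r"]
  have "((\<lambda>x. (-(x + (-r))) powr c) has_integral ((r-a) powr (c+1)/(c+1))) {-(r-a)-(-r)..-0-(-r)}" .
  then show ?thesis by simp
qed

lemma int_le_gen:
  fixes f g :: "real \<Rightarrow> real"
  assumes "(g has_integral I) S" "I \<ge> 0" "\<And>x. x \<in> S \<Longrightarrow> f x \<le> g x"
  shows "integral S f \<le> I"
proof (cases "f integrable_on S")
  case True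
  then show ?thesis using has_integral_le[OF integrable_integral[OF True] assms(1)] assms(3) by blast
next
  case False
  then show ?thesis using not_integrable_integral[OF False] assms(2) by simp
qed

lemma int_nonneg_gen:
  fixes f :: "real \<Rightarrow> real"
  assumes "\<And>x. x \<in> S \<Longrightarrow> 0 \<le> f x"
  shows "0 \<le> integral S f"
proof (cases "f integrable_on S")
  case True
  then show ?thesis using integral_nonneg assms by blast
next
  case False
  then show ?thesis using not_integrable_integral[OF False] by simp
qed

lemma pt_bound:
  fixes x y u v :: real
  assumes "0 \<le> x" "x \<le> y" "v \<le> 0" "u \<le> 0"
  shows "y powr v * x powr u \<le> x powr (v + u)"
proof (cases "x = 0")
  case True then show ?thesis by simp
next
  case False
  then have "x > 0" using assms by simp
  have "y powr v \<le> x powr v" using powr_mono2'[OF assms(3) \<open>x>0\<close> assms(2)] .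
  then have "y powr v * x powr u \<le> x powr v * x powr u"
    by (simp add: mult_right_mono)
  then show ?thesis by (simp add: powr_add)
qed

theorem lemma3:
  fixes a b \<alpha> \<beta> :: real
  assumes "a < b"
    and "0 < \<alpha>" "\<alpha> \<le> 1" "0 < \<beta>" "\<beta> \<le> 1"
    and "1 < \<alpha> + \<beta>" "\<alpha> + \<beta> \<le> 2"
  shows "(\<forall>r t. a \<le> r \<and> r \<le> t \<and> t \<le> b \<longrightarrow> Gker a \<alpha> \<beta> t r \<ge> 0)
    \<and> (\<forall>r\<in>{a..b}. \<forall>t\<in>{a..b}. Gker a \<alpha> \<beta> t r \<le> Gker a \<alpha> \<beta> r r)
    \<and> (\<forall>r\<in>{a..b}. Gker a \<alpha> \<beta> r r
          \<le> (b - a) powr (\<alpha> + \<beta> - 1) / ((\<alpha> + \<beta> - 1) * Gamma \<alpha> * Gamma \<beta>))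
    \<and> (\<exists>r\<in>{a..b}. Gker a \<alpha> \<beta> r r
          = (b - a) powr (\<alpha> + \<beta> - 1) / ((\<alpha> + \<beta> - 1) * Gamma \<alpha> * Gamma \<beta>))"
proof -
  define K where "K = 1 / (Gamma \<alpha> * Gamma \<beta>)"
  define p where "p = \<alpha> + \<beta> - 1"
  have Kpos: "K > 0" unfolding K_def using assms Gamma_real_pos by simp
  have ppos: "p > 0" unfolding p_def using assms by simp
  have cp: "\<beta> - 1 + (\<alpha> - 1) = p - 1" unfolding p_def by simp
  have cgt: "p - 1 > -1" using ppos by simp
  have intg: "((\<lambda>s. (r - s) powr (p - 1)) has_integral ((r-a) powr p / p)) {a..r}"
    if "a \<le> r" for r
    using powr_int[OF that cgt] by simp
  have diag: "Gker a \<alpha> \<beta> r r = K * ((r-a) powr p / p)" if "a \<le> r" for r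
  proof -
    have "integral {a..r} (\<lambda>s. (r - s) powr (\<beta> - 1) * (r - s) powr (\<alpha> - 1))
        = integral {a..r} (\<lambda>s. (r - s) powr (p - 1))"
      by (simp add: powr_add[symmetric] cp)
    also have "\<dots> = (r-a) powr p / p" using intg[OF that] by (rule integral_unique)
    finally show ?thesis unfolding Gker_def K_def by simp
  qed
  have mono: "(r-a) powr p \<le> (b-a) powr p" if "r \<le> b" "a \<le> r" for r
    using powr_mono2[of p "r-a" "b-a"] ppos that by simp
  have P1: "\<forall>r t. a \<le> r \<and> r \<le> t \<and> t \<le> b \<longrightarrow> Gker a \<alpha> \<beta> t r \<ge> 0"
  proof (intro allI impI)
    fix r t assume h: "a \<le> r \<and> r \<le> t \<and> t \<le> b"
    have "0 \<le> integral {a..r} (\<lambda>s. (t - s) powr (\<beta> - 1) * (r - s) powr (\<alpha> - 1))"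
      by (rule int_nonneg_gen) simp
    then show "Gker a \<alpha> \<beta> t r \<ge> 0" using h Kpos unfolding Gker_def K_def[symmetric] by simp
  qed
  have P2: "\<forall>r\<in>{a..b}. \<forall>t\<in>{a..b}. Gker a \<alpha> \<beta> t r \<le> Gker a \<alpha> \<beta> r r"
  proof (intro ballI)
    fix r t assume r: "r \<in> {a..b}" and t: "t \<in> {a..b}"
    show "Gker a \<alpha> \<beta> t r \<le> Gker a \<alpha> \<beta> r r"
    proof (cases "r \<le> t")
      case True
      have "integral {a..r} (\<lambda>s. (t - s) powr (\<beta> - 1) * (r - s) powr (\<alpha> - 1)) \<le> (r-a) powr p / p"
      proof (intro int_le_gen[OF intg])
        show "a \<le> r" using r by simp
        show "0 \<le> (r - a) powr p / p" using ppos by simp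
        fix s assume s: "s \<in> {a..r}"
        have "(t - s) powr (\<beta> - 1) * (r - s) powr (\<alpha> - 1) \<le> (r - s) powr (\<beta> - 1 + (\<alpha> - 1))"
          by (rule pt_bound) (use s True assms in auto)
        then show "(t - s) powr (\<beta> - 1) * (r - s) powr (\<alpha> - 1) \<le> (r - s) powr (p - 1)"
          using cp by simp
      qed
      then have "K * integral {a..r} (\<lambda>s. (t - s) powr (\<beta> - 1) * (r - s) powr (\<alpha> - 1)) \<le> K * ((r-a) powr p / p)"
        by (rule mult_left_mono) (use Kpos in auto)
      then show ?thesis using True diag[of r] r unfolding Gker_def K_def[symmetric] by simp
    next
      case False
      have "integral {a..t} (\<lambda>s. (t - s) powr (\<beta> - 1) * (r - s) powr (\<alpha> - 1)) \<le> (t-a) powr p / p"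
      proof (intro int_le_gen[OF intg])
        show "a \<le> t" using t by simp
        show "0 \<le> (t - a) powr p / p" using ppos by simp
        fix s assume s: "s \<in> {a..t}"
        have "(r - s) powr (\<alpha> - 1) * (t - s) powr (\<beta> - 1) \<le> (t - s) powr (\<alpha> - 1 + (\<beta> - 1))"
          by (rule pt_bound) (use s False assms in auto)
        then show "(t - s) powr (\<beta> - 1) * (r - s) powr (\<alpha> - 1) \<le> (t - s) powr (p - 1)"
          using cp by (simp add: mult.commute add.commute)
      qed
      also have "\<dots> \<le> (r-a) powr p / p"
        using powr_mono2[of p "t-a" "r-a"] ppos t False
        by (simp add: divide_right_mono)
      finally have "K * integral {a..t} (\<lambda>s. (t - s) powr (\<beta> - 1) * (r - s) powr (\<alpha> - 1)) \<le> K * ((r-a) powr p / p)"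
        by (rule mult_left_mono) (use Kpos in auto)
      then show ?thesis using False diag[of r] r unfolding Gker_def K_def[symmetric] by simp
    qed
  qed
  have eqv: "K * ((b-a) powr p / p) = (b - a) powr (\<alpha> + \<beta> - 1) / ((\<alpha> + \<beta> - 1) * Gamma \<alpha> * Gamma \<beta>)"
    unfolding K_def p_def by simp
  have P3: "\<forall>r\<in>{a..b}. Gker a \<alpha> \<beta> r r
          \<le> (b - a) powr (\<alpha> + \<beta> - 1) / ((\<alpha> + \<beta> - 1) * Gamma \<alpha> * Gamma \<beta>)"
  proof
    fix r assume r: "r \<in> {a..b}"
    have "(r-a) powr p / p \<le> (b-a) powr p / p" using mono[of r] r ppos by (simp add: divide_right_mono)
    then show "Gker a \<alpha> \<beta> r r \<le> (b - a) powr (\<alpha> + \<beta> - 1) / ((\<alpha> + \<beta> - 1) * Gamma \<alpha> * Gamma \<beta>)"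
    proof -
      have "K * ((r-a) powr p / p) \<le> K * ((b-a) powr p / p)"
        by (rule mult_left_mono) (use Kpos \<open>(r-a) powr p / p \<le> (b-a) powr p / p\<close> in auto)
      then show ?thesis using diag[of r] r eqv by simp
    qed
  qed
  have P4: "\<exists>r\<in>{a..b}. Gker a \<alpha> \<beta> r r
          = (b - a) powr (\<alpha> + \<beta> - 1) / ((\<alpha> + \<beta> - 1) * Gamma \<alpha> * Gamma \<beta>)"
    using diag[of b] assms eqv by (intro bexI[of _ b]) auto
  show ?thesis using P1 P2 P3 P4 by blast
qed

end
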